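(* Let $(M,S)$ be a spanned map, with $M=(H,\sigma,\alpha)$ and face-permutation $\phi=\sigma\alpha$, and let $\theta$ be its motion function. Then $\theta_{|S}=\sigma_{|S}\alpha_{|S}$ and $\theta_{|\bar S}=\phi_{|\bar S}\alpha_{|\bar S}$, where $\bar S=H\setminus S$. That is, $\theta_{|S}$ is the face-permutation of the pseudo map $M_{|S}$ and $\theta_{|\bar S}$ is the face-permutation of the dual pseudo map $M^*_{|\bar S}$. In particular, a spanned map is a covered map if and only if its motion function is a cyclic permutation.
   Context: Permutations compose right to left. A map is $M=(H,\sigma,\alpha)$ with $H$ finite, $\alpha$ a fixed-point-free involution, $\sigma$ a permutation, $\langle\sigma,\alpha\rangle$ transitive on $H$, and a root in $H$; a pseudo map is the same without transitivity. Its face-permutation is $\sigma\alpha$; faces are its cycles; unicellular means one face. For a permutation $\pi$ and $S\subseteq H$, $\pi_{|S}$ is the permutation of $S$ obtained by deleting from the cycles of $\pi$ the elements not in $S$. A spanned map is $(M,S)$ with $S\subseteq H$ stable by $\alpha$; $M_{|S}=(S,\sigma_{|S},\alpha_{|S})$. The dual map is $M^*=(H,\phi,\alpha)$, so $M^*_{|\bar S}=(\bar S,\phi_{|\bar S},\alpha_{|\bar S})$. $(M,S)$ is a covered map if $M_{|S}$ is a connecting unicellular map: $\sigma_{|S},\alpha_{|S}$ act transitively on $S$, $S$ contains a half-edge of every cycle of $\sigma$ (except that $S=\emptyset$ is allowed when $\sigma$ has a single cycle), and $\sigma_{|S}\alpha_{|S}$ is cyclic. The motion function is $\theta(h)=\sigma\alpha(h)$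 if $h\in S$ and $\theta(h)=\sigma(h)$ if $h\notin S$. *)

theory Defs
  imports "HOL-Combinatorics.Permutations"
begin

text \<open>Permutations are functions that permute the finite set H (identity outside H).
  Composition is right to left: the face permutation is \<sigma> \<circ> \<alpha>.\<close>

definition fpf_involution :: "'a set \<Rightarrow> ('a \<Rightarrow> 'a) \<Rightarrow> bool" where
  "fpf_involution H \<alpha> \<longleftrightarrow> \<alpha> permutes H \<and> (\<forall>h\<in>H. \<alpha> (\<alpha> h) = h \<and> \<alpha> h \<noteq> h)"

definition pseudo_map :: "'a set \<Rightarrow> ('a \<Rightarrow> 'a) \<Rightarrow> ('a \<Rightarrow> 'a) \<Rightarrow> 'a \<Rightarrow> bool" where
  "pseudo_map H \<sigma> \<alpha> r \<longleftrightarrow> finite H \<and> fpf_involution H \<alpha> \<and> \<sigma> permutes H \<and> r \<in> H"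

definition transitive_on :: "'a set \<Rightarrow> ('a \<Rightarrow> 'a) \<Rightarrow> ('a \<Rightarrow> 'a) \<Rightarrow> bool" where
  "transitive_on H \<sigma> \<alpha> \<longleftrightarrow>
     (\<forall>x\<in>H. \<forall>y\<in>H. (x, y) \<in> ({(z, \<sigma> z) | z. z \<in> H} \<union> {(z, \<alpha> z) | z. z \<in> H})\<^sup>*)"

definition is_map :: "'a set \<Rightarrow> ('a \<Rightarrow> 'a) \<Rightarrow> ('a \<Rightarrow> 'a) \<Rightarrow> 'a \<Rightarrow> bool" where
  "is_map H \<sigma> \<alpha> r \<longleftrightarrow> pseudo_map H \<sigma> \<alpha> r \<and> transitive_on H \<sigma> \<alpha>"

definition face_perm :: "('a \<Rightarrow> 'a) \<Rightarrow> ('a \<Rightarrow> 'a) \<Rightarrow> 'a \<Rightarrow> 'a" where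
  "face_perm \<sigma> \<alpha> = \<sigma> \<circ> \<alpha>"

text \<open>The induced permutation \<pi>_{|S}: delete from the cycles of \<pi> the elements not in S,
  i.e. map x \<in> S to the first return of its \<pi>-orbit into S; identity outside S.\<close>
definition restrict_perm :: "('a \<Rightarrow> 'a) \<Rightarrow> 'a set \<Rightarrow> 'a \<Rightarrow> 'a" where
  "restrict_perm \<pi> S x =
     (if x \<in> S then (\<pi> ^^ (LEAST k. 0 < k \<and> (\<pi> ^^ k) x \<in> S)) x else x)"

definition cyclic_on :: "('a \<Rightarrow> 'a) \<Rightarrow> 'a set \<Rightarrow> bool" where
  "cyclic_on \<pi> S \<longleftrightarrow> (\<forall>x\<in>S. \<forall>y\<in>S. \<exists>n. (\<pi> ^^ n) x = y)"

definition spanned_map :: "'a set \<Rightarrow> ('a \<Rightarrow> 'a) \<Rightarrow> ('a \<Rightarrow> 'a) \<Rightarrow> 'a \<Rightarrow> 'a set \<Rightarrow> bool" where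
  "spanned_map H \<sigma> \<alpha> r S \<longleftrightarrow> is_map H \<sigma> \<alpha> r \<and> S \<subseteq> H \<and> \<alpha> ` S \<subseteq> S"

definition motion :: "('a \<Rightarrow> 'a) \<Rightarrow> ('a \<Rightarrow> 'a) \<Rightarrow> 'a set \<Rightarrow> 'a \<Rightarrow> 'a" where
  "motion \<sigma> \<alpha> S h = (if h \<in> S then \<sigma> (\<alpha> h) else \<sigma> h)"

text \<open>M_{|S} is a connecting unicellular map.\<close>
definition covered_map :: "'a set \<Rightarrow> ('a \<Rightarrow> 'a) \<Rightarrow> ('a \<Rightarrow> 'a) \<Rightarrow> 'a \<Rightarrow> 'a set \<Rightarrow> bool" where
  "covered_map H \<sigma> \<alpha> r S \<longleftrightarrow>
     spanned_map H \<sigma> \<alpha> r S \<and>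
     transitive_on S (restrict_perm \<sigma> S) (restrict_perm \<alpha> S) \<and>
     ((\<forall>x\<in>H. \<exists>k. (\<sigma> ^^ k) x \<in> S) \<or> (S = {} \<and> cyclic_on \<sigma> H)) \<and>
     cyclic_on (face_perm (restrict_perm \<sigma> S) (restrict_perm \<alpha> S)) S"

end

theory Submission imports Defs begin

lemma funpow_same_path:
  assumes "\<And>z. z \<notin> T \<Longrightarrow> g z = f z" "g x = f y"
  shows "0 < j \<Longrightarrow> (\<forall>i. 0 < i \<and> i < j \<longrightarrow> (f ^^ i) y \<notin> T) \<Longrightarrow> (g ^^ j) x = (f ^^ j) y"
proof (induction j)
  case 0 then show ?case by simp
next
  case (Suc j)
  show ?case
  proof (cases "j = 0")
    case True then show ?thesis using assms by simp
  next
    case False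
    then have "(g ^^ j) x = (f ^^ j) y" using Suc by auto
    moreover have "(f ^^ j) y \<notin> T" using Suc.prems False by auto
    ultimately show ?thesis using assms(1) by simp
  qed
qed

lemma least_same_path:
  assumes "\<And>z. z \<notin> T \<Longrightarrow> g z = f z" "g x = f y" "\<exists>k. 0 < k \<and> (f ^^ k) y \<in> T"
  shows "(g ^^ (LEAST k. 0 < k \<and> (g ^^ k) x \<in> T)) x = (f ^^ (LEAST k. 0 < k \<and> (f ^^ k) y \<in> T)) y"
proof -
  define m where "m = (LEAST k. 0 < k \<and> (f ^^ k) y \<in> T)"
  have m: "0 < m \<and> (f ^^ m) y \<in> T" unfolding m_def using assms(3) by (rule LeastI_ex)
  have lt: "\<And>i. i < m \<Longrightarrow> \<not> (0 < i \<and> (f ^^ i) y \<in> T)" unfolding m_def using not_less_Least by blast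
  have eq: "\<And>j. 0 < j \<Longrightarrow> j \<le> m \<Longrightarrow> (g ^^ j) x = (f ^^ j) y"
  proof -
    fix j assume j: "0 < j" "j \<le> m"
    have "\<forall>i. 0 < i \<and> i < j \<longrightarrow> (f ^^ i) y \<notin> T" using lt j(2) by (meson less_le_trans)
    then show "(g ^^ j) x = (f ^^ j) y" using funpow_same_path[of T g f x y j] assms(1,2) j by blast
  qed
  have "(LEAST k. 0 < k \<and> (g ^^ k) x \<in> T) = m"
  proof (rule Least_equality)
    show "0 < m \<and> (g ^^ m) x \<in> T" using m eq by simp
  next
    fix k assume "0 < k \<and> (g ^^ k) x \<in> T"
    then show "m \<le> k" using eq lt by (metis less_imp_le_nat not_le_imp_less)
  qed
  then show ?thesis using eq m m_def by simp
qed

lemma return_exists: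
  assumes "finite H" "f permutes H" "x \<in> T" 
  shows "\<exists>k. 0 < k \<and> (f ^^ k) x \<in> T"
proof -
  have "permutation f" using assms permutation_permutes by blast
  then obtain n where "n > 0" "(f ^^ n) x = x" by (rule permutation_self)
  then show ?thesis using assms by auto
qed

lemma rp_in:
  assumes "finite H" "f permutes H" "x \<in> T"
  shows "restrict_perm f T x \<in> T"
  using LeastI_ex[OF return_exists[OF assms]] assms(3) unfolding restrict_perm_def by simp

lemma rp_funpow: "\<exists>n. (restrict_perm g T ^^ m) x = (g ^^ n) x"
proof (induction m arbitrary: x)
  case 0 then show ?case by (metis funpow_0)
next
  case (Suc m)
  obtain n where n: "(restrict_perm g T ^^ m) (restrict_perm g T x) = (g ^^ n) (restrict_perm g T x)"
    using Suc by blast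
  obtain L where L: "restrict_perm g T x = (g ^^ L) x" unfolding restrict_perm_def
    by (metis funpow_0)
  show ?case using n L by (metis funpow_Suc_right funpow_add o_apply)
qed

lemma rp_cyclic:
  assumes "cyclic_on g H" "T \<subseteq> H"
  shows "cyclic_on (restrict_perm g T) T"
  unfolding cyclic_on_def
proof (intro ballI)
  fix x y assume xy: "x \<in> T" "y \<in> T"
  then obtain n where "(g ^^ n) x = y" using assms unfolding cyclic_on_def by blast
  then show "\<exists>m. (restrict_perm g T ^^ m) x = y" using xy(1)
  proof (induction n arbitrary: x rule: less_induct)
    case (less n x)
    show ?case
    proof (cases "n = 0")
      case True then show ?thesis using less by (metis funpow_0)
    next
      case False
      define L where "L = (LEAST k. 0 < k \<and> (g ^^ k) x \<in> T)"
      have ex: "0 < n \<and> (g ^^ n) x \<in> T" using False less xy by simp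
      have L: "0 < L \<and> (g ^^ L) x \<in> T" unfolding L_def using ex by (rule LeastI)
      have Ln: "L \<le> n" unfolding L_def using ex by (rule Least_le)
      have rx: "restrict_perm g T x = (g ^^ L) x" using less(3) unfolding restrict_perm_def L_def by simp
      have "(g ^^ (n - L)) ((g ^^ L) x) = y" using less(2) Ln
        by (metis funpow_add le_add_diff_inverse2 o_apply)
      have "n - L < n" using L False by simp
      then obtain m where "(restrict_perm g T ^^ m) (restrict_perm g T x) = y"
        using less(1)[of "n - L" "(g ^^ L) x"] L rx \<open>(g ^^ (n - L)) ((g ^^ L) x) = y\<close> by auto
      then show ?thesis by (metis funpow_Suc_right o_apply)
    qed
  qed
qed

lemma same_until:
  assumes "\<And>z. z \<notin> T \<Longrightarrow> g z = f z"
  shows "(\<forall>i<n. (g ^^ i) x \<notin> T) \<Longrightarrow> (g ^^ n) x = (f ^^ n) x"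
proof (induction n)
  case 0 then show ?case by simp
next
  case (Suc n)
  then have "(g ^^ n) x = (f ^^ n) x" "(g ^^ n) x \<notin> T" by auto
  then show ?case using assms by simp
qed

lemma funpow_mult_fix:
  assumes "(f ^^ p) y = y" shows "(f ^^ (p * k)) y = y"
proof (induction k)
  case 0 then show ?case by simp
next
  case (Suc k)
  have "p * Suc k = p + p * k" by simp
  then show ?case using Suc assms by (simp only: funpow_add o_apply)
qed

lemma fp_apply: "face_perm f g x = f (g x)" by (simp add: face_perm_def)

lemma rp_one:
  assumes "x \<in> T" "a x \<in> T"
  shows "restrict_perm a T x = a x"
proof -
  have "(LEAST k. 0 < k \<and> (a ^^ k) x \<in> T) = 1"
    by (rule Least_equality) (use assms in auto)
  then show ?thesis using assms unfolding restrict_perm_def by simp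
qed

theorem mainTheorem5:
  fixes H S :: "'a set" and \<sigma> \<alpha> :: "'a \<Rightarrow> 'a" and r :: 'a
  assumes "spanned_map H \<sigma> \<alpha> r S"
  shows "restrict_perm (motion \<sigma> \<alpha> S) S
           = face_perm (restrict_perm \<sigma> S) (restrict_perm \<alpha> S)
       \<and> restrict_perm (motion \<sigma> \<alpha> S) (H - S)
           = face_perm (restrict_perm (face_perm \<sigma> \<alpha>) (H - S)) (restrict_perm \<alpha> (H - S))
       \<and> (covered_map H \<sigma> \<alpha> r S \<longleftrightarrow> cyclic_on (motion \<sigma> \<alpha> S) H)"
proof -
  have A0: "((finite H \<and> fpf_involution H \<alpha> \<and> \<sigma> permutes H \<and> r \<in> H) \<and> transitive_on H \<sigma> \<alpha>) \<and> S \<subseteq> H \<and> \<alpha> ` S \<subseteq> S"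
    using assms unfolding spanned_map_def is_map_def pseudo_map_def .
  have fin: "finite H" and ap0: "fpf_involution H \<alpha>" and sp: "\<sigma> permutes H" and SH: "S \<subseteq> H"
    and aSS: "\<alpha> ` S \<subseteq> S" using A0 by blast+
  have ap: "\<alpha> permutes H" and ainv: "\<And>h. h \<in> H \<Longrightarrow> \<alpha> (\<alpha> h) = h"
    using ap0 unfolding fpf_involution_def by simp_all
  have aS: "\<And>h. h \<in> S \<Longrightarrow> \<alpha> h \<in> S" using aSS by blast
  define \<theta> where "\<theta> = motion \<sigma> \<alpha> S"
  have aH: "\<And>h. h \<in> H \<Longrightarrow> \<alpha> h \<in> H" using permutes_in_image[OF ap] by simp
  have aout: "\<And>h. h \<notin> H \<Longrightarrow> \<alpha> h = h" by (rule permutes_not_in[OF ap])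
  have sout: "\<And>h. h \<notin> H \<Longrightarrow> \<sigma> h = h" by (rule permutes_not_in[OF sp])
  have P1: "restrict_perm \<theta> S = face_perm (restrict_perm \<sigma> S) (restrict_perm \<alpha> S)"
  proof
    fix x show "restrict_perm \<theta> S x = face_perm (restrict_perm \<sigma> S) (restrict_perm \<alpha> S) x"
    proof (cases "x \<in> S")
      case True
      have ax: "\<alpha> x \<in> S" using True aS by blast
      have "restrict_perm \<theta> S x = (\<theta> ^^ (LEAST k. 0 < k \<and> (\<theta> ^^ k) x \<in> S)) x"
        using True unfolding restrict_perm_def by simp
      also have "\<dots> = (\<sigma> ^^ (LEAST k. 0 < k \<and> (\<sigma> ^^ k) (\<alpha> x) \<in> S)) (\<alpha> x)"
        by (rule least_same_path) (use True ax return_exists[OF fin sp ax] in \<open>auto simp: \<theta>_def motion_def\<close>)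
      also have "\<dots> = restrict_perm \<sigma> S (\<alpha> x)" using ax unfolding restrict_perm_def by simp
      finally show ?thesis using rp_one[of x _ \<alpha>, OF True ax] by (simp add: face_perm_def)
    qed (simp add: restrict_perm_def face_perm_def)
  qed
  have P2: "restrict_perm \<theta> (H - S) = face_perm (restrict_perm (face_perm \<sigma> \<alpha>) (H - S)) (restrict_perm \<alpha> (H - S))"
  proof
    fix x show "restrict_perm \<theta> (H - S) x = face_perm (restrict_perm (face_perm \<sigma> \<alpha>) (H - S)) (restrict_perm \<alpha> (H - S)) x"
    proof (cases "x \<in> H - S")
      case True
      have ax1: "\<alpha> x \<in> H" using True aH by blast
      have "\<alpha> x \<notin> S"
      proof
        assume "\<alpha> x \<in> S"
        then have "\<alpha> (\<alpha> x) \<in> S" by (rule aS)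
        then show False using True ainv by simp
      qed
      then have ax: "\<alpha> x \<in> H - S" using ax1 by blast
      have php: "face_perm \<sigma> \<alpha> permutes H" unfolding face_perm_def using permutes_compose[OF ap sp] .
      have "restrict_perm \<theta> (H - S) x = (\<theta> ^^ (LEAST k. 0 < k \<and> (\<theta> ^^ k) x \<in> H - S)) x"
        using True unfolding restrict_perm_def by simp
      also have "\<dots> = (face_perm \<sigma> \<alpha> ^^ (LEAST k. 0 < k \<and> (face_perm \<sigma> \<alpha> ^^ k) (\<alpha> x) \<in> H - S)) (\<alpha> x)"
        by (rule least_same_path) (use True ax return_exists[OF fin php ax] aout ainv in \<open>auto simp: \<theta>_def motion_def face_perm_def\<close>)
      also have "\<dots> = restrict_perm (face_perm \<sigma> \<alpha>) (H - S) (\<alpha> x)" using ax unfolding restrict_perm_def by simp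
      finally show ?thesis using rp_one[of x _ \<alpha>, OF True ax] by (simp only: fp_apply)
    next
      case False
      have "restrict_perm \<alpha> (H-S) x = x" "restrict_perm (face_perm \<sigma> \<alpha>) (H-S) x = x" "restrict_perm \<theta> (H-S) x = x"
        using False unfolding restrict_perm_def by auto
      then show ?thesis by (simp only: fp_apply)
    qed
  qed
  define \<beta> where "\<beta> = (\<lambda>h. if h \<in> S then \<alpha> h else h)"
  have bb: "\<beta> (\<beta> y) = y" for y
  proof (cases "y \<in> S")
    case True then show ?thesis unfolding \<beta>_def using aS ainv SH by auto
  qed (simp add: \<beta>_def)
  have bp: "\<beta> permutes H" unfolding permutes_def
  proof
    show "\<forall>x. x \<notin> H \<longrightarrow> \<beta> x = x" unfolding \<beta>_def using SH by auto
    show "\<forall>y. \<exists>!x. \<beta> x = y"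
    proof
      fix y show "\<exists>!x. \<beta> x = y"
      proof (rule ex1I[of _ "\<beta> y"])
        show "\<beta> (\<beta> y) = y" by (rule bb)
        fix x assume "\<beta> x = y" then show "x = \<beta> y" using bb by metis
      qed
    qed
  qed
  have "\<theta> = \<sigma> \<circ> \<beta>" unfolding \<theta>_def \<beta>_def motion_def by auto
  then have tp: "\<theta> permutes H" using permutes_compose[OF bp sp] by simp
  have offS: "\<And>z. z \<notin> S \<Longrightarrow> \<theta> z = \<sigma> z" unfolding \<theta>_def motion_def by simp
  have empty: "S = {} \<Longrightarrow> \<theta> = \<sigma>" unfolding \<theta>_def motion_def by auto
  have P3: "covered_map H \<sigma> \<alpha> r S \<longleftrightarrow> cyclic_on \<theta> H"
  proof
    assume cov: "covered_map H \<sigma> \<alpha> r S"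
    then have cycS: "cyclic_on (restrict_perm \<theta> S) S" using P1 unfolding covered_map_def by simp
    have reach: "\<forall>x\<in>H. \<exists>k. (\<sigma> ^^ k) x \<in> S" if "\<not> (S = {} \<and> cyclic_on \<sigma> H)"
      using cov that unfolding covered_map_def by blast
    show "cyclic_on \<theta> H"
    proof (cases "S = {} \<and> cyclic_on \<sigma> H")
      case True then show ?thesis using empty by simp
    next
      case False
      have treach: "\<exists>k. (\<theta> ^^ k) x \<in> S" if "x \<in> H" for x
      proof -
        have ex: "\<exists>k. (\<sigma> ^^ k) x \<in> S" using reach[OF False] that by blast
        define k where "k = (LEAST k. (\<sigma> ^^ k) x \<in> S)"
        have k: "(\<sigma> ^^ k) x \<in> S" unfolding k_def using ex by (rule LeastI_ex)
        have "\<forall>i<k. (\<sigma> ^^ i) x \<notin> S" unfolding k_def using not_less_Least by blast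
        then have "(\<sigma> ^^ k) x = (\<theta> ^^ k) x" using same_until[of S \<sigma> \<theta> k x] offS by metis
        then show ?thesis using k by metis
      qed
      show ?thesis unfolding cyclic_on_def
      proof (intro ballI)
        fix x y assume xy: "x \<in> H" "y \<in> H"
        obtain k1 where k1: "(\<theta> ^^ k1) x \<in> S" using treach xy by blast
        obtain k2 where k2: "(\<theta> ^^ k2) y \<in> S" using treach xy by blast
        obtain m where "(restrict_perm \<theta> S ^^ m) ((\<theta> ^^ k1) x) = (\<theta> ^^ k2) y"
          using cycS k1 k2 unfolding cyclic_on_def by blast
        then obtain n where n: "(\<theta> ^^ n) ((\<theta> ^^ k1) x) = (\<theta> ^^ k2) y" using rp_funpow by metis
        have "permutation \<theta>" using tp fin permutation_permutes by blast
        then obtain p where p: "p > 0" "(\<theta> ^^ p) y = y" by (rule permutation_self)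
        have pk: "(\<theta> ^^ (p * k2)) y = y" using funpow_mult_fix[OF p(2)] .
        have le: "k2 \<le> p * k2" using p(1) by simp
        have "(\<theta> ^^ (p * k2 - k2)) ((\<theta> ^^ k2) y) = y"
          using pk le by (metis funpow_add le_add_diff_inverse2 o_apply)
        then have "(\<theta> ^^ (p * k2 - k2 + n + k1)) x = y" using n by (simp add: funpow_add)
        then show "\<exists>n. (\<theta> ^^ n) x = y" by blast
      qed
    qed
  next
    assume cyc: "cyclic_on \<theta> H"
    have c1: "cyclic_on (face_perm (restrict_perm \<sigma> S) (restrict_perm \<alpha> S)) S"
      using rp_cyclic[OF cyc SH] P1 by simp
    have tr: "transitive_on S (restrict_perm \<sigma> S) (restrict_perm \<alpha> S)"
      unfolding transitive_on_def
    proof (intro ballI)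
      fix x y assume xy: "x \<in> S" "y \<in> S"
      let ?R = "{(z, restrict_perm \<sigma> S z) | z. z \<in> S} \<union> {(z, restrict_perm \<alpha> S z) | z. z \<in> S}"
      let ?F = "face_perm (restrict_perm \<sigma> S) (restrict_perm \<alpha> S)"
      obtain m where m: "(?F ^^ m) x = y" using c1 xy unfolding cyclic_on_def by blast
      have "(x, (?F ^^ m) x) \<in> ?R\<^sup>* \<and> (?F ^^ m) x \<in> S" for m
      proof (induction m)
        case 0 then show ?case using xy by simp
      next
        case (Suc m)
        define z where "z = (?F ^^ m) x"
        have z: "(x, z) \<in> ?R\<^sup>*" "z \<in> S" using Suc z_def by auto
        define a where "a = restrict_perm \<alpha> S z"
        have a: "a \<in> S" unfolding a_def using rp_in[OF fin ap z(2)] .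
        have b: "restrict_perm \<sigma> S a \<in> S" using rp_in[OF fin sp a] .
        have "(z, a) \<in> ?R" using z(2) a_def by blast
        moreover have "(a, restrict_perm \<sigma> S a) \<in> ?R" using a by blast
        ultimately have "(x, restrict_perm \<sigma> S a) \<in> ?R\<^sup>*" using z(1)
          by (meson rtrancl_into_rtrancl)
        moreover have "(?F ^^ Suc m) x = restrict_perm \<sigma> S a"
          by (simp add: z_def a_def face_perm_def)
        ultimately show ?case using b by simp
      qed
      then show "(x, y) \<in> ?R\<^sup>*" using m by blast
    qed
    have cov: "(\<forall>x\<in>H. \<exists>k. (\<sigma> ^^ k) x \<in> S) \<or> (S = {} \<and> cyclic_on \<sigma> H)"
    proof (cases "S = {}")
      case True then show ?thesis using empty cyc by simp
    next
      case False
      then obtain s where s: "s \<in> S" by blast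
      have "\<exists>k. (\<sigma> ^^ k) x \<in> S" if x: "x \<in> H" for x
      proof -
        have "s \<in> H" using s SH by blast
        then obtain n where "(\<theta> ^^ n) x = s" using cyc x unfolding cyclic_on_def by blast
        then have ex: "\<exists>k. (\<theta> ^^ k) x \<in> S" using s by blast
        define k where "k = (LEAST k. (\<theta> ^^ k) x \<in> S)"
        have k: "(\<theta> ^^ k) x \<in> S" unfolding k_def using ex by (rule LeastI_ex)
        have "\<forall>i<k. (\<theta> ^^ i) x \<notin> S" unfolding k_def using not_less_Least by blast
        then have "(\<theta> ^^ k) x = (\<sigma> ^^ k) x" using same_until[of S \<theta> \<sigma> k x] offS by metis
        then show ?thesis using k by metis
      qed
      then show ?thesis by blast
    qed
    show "covered_map H \<sigma> \<alpha> r S" unfolding covered_map_def using assms tr cov c1 by blast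
  qed
  show ?thesis using conjI[OF P1 conjI[OF P2 P3]] unfolding \<theta>_def .
qed

end
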